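(* Let $k$ be a nonnegative integer. Then there exist rational numbers $\xi_\nu$, indexed by integer partitions $\nu$ with $|\nu|\le k$, such that for every $m\ge0$ and all real numbers $a_0<a_1<\cdots<a_m$ and $b_1<b_2<\cdots<b_m$, $$\sum_{0\le i\le m}\frac{\prod_{1\le j\le m}(a_i-b_j)}{\prod_{0\le j\le m,\ j\ne i}(a_i-a_j)}\,a_i^k=\sum_{|\nu|\le k}\xi_\nu\, q_\nu(\{a_i\},\{b_i\}).$$
   Context: For numbers $a_0,\dots,a_m$ and $b_1,\dots,b_m$ and $k\ge0$, set $q_k(\{a_i\},\{b_i\})=\sum_{i=0}^m a_i^k-\sum_{i=1}^m b_i^k$. For an integer partition $\nu=(\nu_1,\dots,\nu_\ell)$ (a weakly decreasing finite sequence of positive integers, $|\nu|=\sum\nu_j$), set $q_\nu(\{a_i\},\{b_i\})=\prod_{j=1}^{\ell}q_{\nu_j}(\{a_i\},\{b_i\})$, with $q_\emptyset=1$. *)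

theory Defs
  imports Complex_Main
begin

definition is_partition :: "nat list \<Rightarrow> bool" where
  "is_partition \<nu> \<longleftrightarrow> sorted_wrt (\<ge>) \<nu> \<and> (\<forall>x\<in>set \<nu>. 0 < x)"

definition q :: "nat \<Rightarrow> nat \<Rightarrow> (nat \<Rightarrow> real) \<Rightarrow> (nat \<Rightarrow> real) \<Rightarrow> real" where
  "q m k a b = (\<Sum>i=0..m. a i ^ k) - (\<Sum>i=1..m. b i ^ k)"

definition q_part :: "nat \<Rightarrow> nat list \<Rightarrow> (nat \<Rightarrow> real) \<Rightarrow> (nat \<Rightarrow> real) \<Rightarrow> real" where
  "q_part m \<nu> a b = prod_list (map (\<lambda>j. q m j a b) \<nu>)"

end

theory Submission
  imports Defs "HOL-Computational_Algebra.Computational_Algebra"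
begin


definition LL :: "nat \<Rightarrow> nat list set" where
  "LL k = {\<nu>. (\<forall>x\<in>set \<nu>. 0 < x) \<and> sum_list \<nu> \<le> k}"

lemma length_le_sum_list: "(\<forall>x\<in>set xs. 0 < (x::nat)) \<Longrightarrow> length xs \<le> sum_list xs"
  by (induction xs) auto

lemma finite_LL: "finite (LL k)"
proof -
  have "LL k \<subseteq> {xs. set xs \<subseteq> {..k} \<and> length xs \<le> k}"
  proof
    fix xs assume "xs \<in> LL k"
    hence p: "\<forall>x\<in>set xs. 0 < x" and s: "sum_list xs \<le> k" by (auto simp: LL_def)
    have "set xs \<subseteq> {..k}" using member_le_sum_list[of _ xs] s by fastforce
    moreover have "length xs \<le> k" using length_le_sum_list[OF p] s by linarith
    ultimately show "xs \<in> {xs. set xs \<subseteq> {..k} \<and> length xs \<le> k}" by simp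
  qed
  moreover have "finite {xs. set xs \<subseteq> {..k::nat} \<and> length xs \<le> k}"
    by (rule finite_lists_length_le) simp
  ultimately show ?thesis by (rule finite_subset)
qed

definition expr :: "nat \<Rightarrow> (nat \<Rightarrow> (nat\<Rightarrow>real) \<Rightarrow> (nat\<Rightarrow>real) \<Rightarrow> real) \<Rightarrow> bool" where
  "expr k f \<longleftrightarrow> (\<exists>c::nat list \<Rightarrow> rat. \<forall>m a b. f m a b = (\<Sum>\<nu>\<in>LL k. of_rat (c \<nu>) * q_part m \<nu> a b))"

lemma LL_mono: "k \<le> k' \<Longrightarrow> LL k \<subseteq> LL k'"
  unfolding LL_def by auto

lemma expr_mono:
  assumes "k \<le> k'" "expr k f" shows "expr k' f"
proof -
  from assms(2) obtain c where c: "\<And>m a b. f m a b = (\<Sum>\<nu>\<in>LL k. of_rat (c \<nu>) * q_part m \<nu> a b)"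
    unfolding expr_def by blast
  define c' where "c' \<nu> = (if \<nu> \<in> LL k then c \<nu> else 0)" for \<nu>
  have "f m a b = (\<Sum>\<nu>\<in>LL k'. of_rat (c' \<nu>) * q_part m \<nu> a b)" for m a b
  proof -
    have "(\<Sum>\<nu>\<in>LL k'. of_rat (c' \<nu>) * q_part m \<nu> a b) = (\<Sum>\<nu>\<in>LL k. of_rat (c' \<nu>) * q_part m \<nu> a b)"
      by (rule sum.mono_neutral_right) (use finite_LL LL_mono[OF assms(1)] in \<open>auto simp: c'_def\<close>)
    also have "\<dots> = f m a b" unfolding c by (rule sum.cong) (auto simp: c'_def)
    finally show ?thesis by simp
  qed
  thus ?thesis unfolding expr_def by blast
qed

lemma expr_one: "expr k (\<lambda>m a b. 1)"
proof -
  have "(\<Sum>\<nu>\<in>LL k. of_rat (if \<nu> = [] then 1 else 0) * q_part m \<nu> a b) = 1" for m a b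
  proof -
    have "(\<Sum>\<nu>\<in>LL k. of_rat (if \<nu> = [] then 1 else 0) * q_part m \<nu> a b)
        = (\<Sum>\<nu>\<in>LL k. if \<nu> = [] then q_part m \<nu> a b else 0)"
      by (rule sum.cong) auto
    also have "\<dots> = 1" using finite_LL by (simp add: LL_def q_part_def)
    finally show ?thesis .
  qed
  thus ?thesis unfolding expr_def by (metis (no_types))
qed

lemma expr_zero: "expr k (\<lambda>m a b. 0)"
  unfolding expr_def by (rule exI[of _ "\<lambda>_. 0"]) simp

lemma expr_add: "expr k f \<Longrightarrow> expr k g \<Longrightarrow> expr k (\<lambda>m a b. f m a b + g m a b)"
  unfolding expr_def
  apply (elim exE)
  subgoal for c d
    by (rule exI[of _ "\<lambda>\<nu>. c \<nu> + d \<nu>"]) (simp add: of_rat_add distrib_right sum.distrib)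
  done

lemma expr_scale: "expr k f \<Longrightarrow> expr k (\<lambda>m a b. of_rat r * f m a b)"
  unfolding expr_def
  apply (elim exE)
  subgoal for c
    by (rule exI[of _ "\<lambda>\<nu>. r * c \<nu>"]) (simp add: of_rat_mult sum_distrib_left mult.assoc)
  done

lemma expr_sum: "finite S \<Longrightarrow> (\<And>i. i \<in> S \<Longrightarrow> expr k (g i)) \<Longrightarrow> expr k (\<lambda>m a b. \<Sum>i\<in>S. g i m a b)"
  by (induction S rule: finite_induct) (auto intro: expr_add expr_zero)

lemma expr_mult_q:
  assumes "0 < n" "expr k f" shows "expr (k + n) (\<lambda>m a b. q m n a b * f m a b)"
proof -
  from assms(2) obtain c where c: "\<And>m a b. f m a b = (\<Sum>\<nu>\<in>LL k. of_rat (c \<nu>) * q_part m \<nu> a b)"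
    unfolding expr_def by blast
  define c' where "c' \<mu> = (if \<mu> \<in> Cons n ` LL k then c (tl \<mu>) else 0)" for \<mu>
  have sub: "Cons n ` LL k \<subseteq> LL (k + n)" using assms(1) by (auto simp: LL_def)
  have "q m n a b * f m a b = (\<Sum>\<nu>\<in>LL (k+n). of_rat (c' \<nu>) * q_part m \<nu> a b)" for m a b
  proof -
    have "(\<Sum>\<nu>\<in>LL (k+n). of_rat (c' \<nu>) * q_part m \<nu> a b) = (\<Sum>\<nu>\<in>Cons n ` LL k. of_rat (c' \<nu>) * q_part m \<nu> a b)"
      by (rule sum.mono_neutral_right) (use finite_LL sub in \<open>auto simp: c'_def\<close>)
    also have "\<dots> = (\<Sum>\<nu>\<in>LL k. of_rat (c' (n # \<nu>)) * q_part m (n # \<nu>) a b)"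
      by (subst sum.reindex) (auto simp: inj_on_def)
    also have "\<dots> = (\<Sum>\<nu>\<in>LL k. q m n a b * (of_rat (c \<nu>) * q_part m \<nu> a b))"
      by (rule sum.cong) (auto simp: c'_def q_part_def)
    also have "\<dots> = q m n a b * f m a b" by (simp add: c sum_distrib_left)
    finally show ?thesis by simp
  qed
  thus ?thesis unfolding expr_def by blast
qed

lemma q_part_perm: "mset xs = mset ys \<Longrightarrow> q_part m xs a b = q_part m ys a b"
  unfolding q_part_def by (metis mset_map prod_mset_prod_list)

lemma expr_final:
  assumes "expr k f"
  shows "\<exists>\<xi> :: nat list \<Rightarrow> rat. \<forall>m a b. f m a b =
     (\<Sum>\<nu>\<in>{\<nu>. is_partition \<nu> \<and> sum_list \<nu> \<le> k}. of_rat (\<xi> \<nu>) * q_part m \<nu> a b)"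
proof -
  from assms obtain c where c: "\<And>m a b. f m a b = (\<Sum>\<nu>\<in>LL k. of_rat (c \<nu>) * q_part m \<nu> a b)"
    unfolding expr_def by blast
  define P where "P = {\<nu>. is_partition \<nu> \<and> sum_list \<nu> \<le> k}"
  define g where "g \<nu> = rev (sort \<nu>)" for \<nu> :: "nat list"
  define \<xi> where "\<xi> p = (\<Sum>\<nu>\<in>{\<nu>. \<nu> \<in> LL k \<and> g \<nu> = p}. c \<nu>)" for p
  have PL: "P \<subseteq> LL k" by (auto simp: P_def LL_def is_partition_def)
  have fP: "finite P" using finite_subset[OF PL finite_LL] .
  have gP: "g ` LL k \<subseteq> P"
  proof
    fix x assume "x \<in> g ` LL k"
    then obtain \<nu> where x: "x = rev (sort \<nu>)" and "\<nu> \<in> LL k" by (auto simp: g_def)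
    hence "\<forall>y\<in>set \<nu>. 0 < y" "sum_list \<nu> \<le> k" by (auto simp: LL_def)
    moreover have "sorted_wrt (\<ge>) x" unfolding x sorted_wrt_rev using sorted_sort[of \<nu>]
      by simp
    moreover have "sum_list x = sum_list \<nu>" unfolding x by (metis mset_rev mset_sort sum_mset_sum_list)
    ultimately show "x \<in> P" by (auto simp: P_def is_partition_def x)
  qed
  have "f m a b = (\<Sum>\<nu>\<in>P. of_rat (\<xi> \<nu>) * q_part m \<nu> a b)" for m a b
  proof -
    have "(\<Sum>\<nu>\<in>P. of_rat (\<xi> \<nu>) * q_part m \<nu> a b)
       = (\<Sum>p\<in>P. \<Sum>\<nu>\<in>{\<nu>. \<nu> \<in> LL k \<and> g \<nu> = p}. of_rat (c \<nu>) * q_part m \<nu> a b)"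
    proof (rule sum.cong[OF refl])
      fix p assume "p \<in> P"
      have "of_rat (\<xi> p) * q_part m p a b = (\<Sum>\<nu>\<in>{\<nu>. \<nu> \<in> LL k \<and> g \<nu> = p}. of_rat (c \<nu>) * q_part m p a b)"
        by (simp add: \<xi>_def of_rat_sum sum_distrib_right)
      also have "\<dots> = (\<Sum>\<nu>\<in>{\<nu>. \<nu> \<in> LL k \<and> g \<nu> = p}. of_rat (c \<nu>) * q_part m \<nu> a b)"
        by (rule sum.cong[OF refl]) (auto simp: g_def intro!: q_part_perm)
      finally show "of_rat (\<xi> p) * q_part m p a b = \<dots>" .
    qed
    also have "\<dots> = (\<Sum>\<nu>\<in>LL k. of_rat (c \<nu>) * q_part m \<nu> a b)"
      by (rule sum.group[OF finite_LL fP gP])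
    finally show ?thesis by (simp add: c)
  qed
  thus ?thesis unfolding P_def by blast
qed



definition EE :: "real \<Rightarrow> real fps" where "EE c = Abs_fps (\<lambda>n. c ^ n)"

lemma EE_inv: "EE c * (1 - fps_const c * fps_X) = 1"
proof -
  have "(1 - fps_const c * fps_X) * EE c = 1"
  proof (rule fps_ext)
    fix n
    have "(1 - fps_const c * fps_X) * EE c = EE c - fps_const c * (fps_X * EE c)"
      by (simp add: algebra_simps)
    thus "((1 - fps_const c * fps_X) * EE c) $ n = 1 $ n"
      by (cases n) (simp_all add: EE_def)
  qed
  thus ?thesis by (simp add: mult.commute)
qed

lemma EE_deriv: "fps_deriv (EE c) = EE c * (fps_const c * EE c)"
proof (rule fps_ext)
  fix n
  have "(\<Sum>i=0..n. c ^ i * c ^ (n - i)) = (\<Sum>i=0..n. c ^ n)"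
    by (rule sum.cong) (auto simp: power_add[symmetric])
  hence "(EE c * EE c) $ n = real (Suc n) * c ^ n"
    by (simp add: fps_mult_nth EE_def)
  moreover have "EE c * (fps_const c * EE c) = fps_const c * (EE c * EE c)" by (simp add: algebra_simps)
  ultimately have "(EE c * (fps_const c * EE c)) $ n = c * (real (Suc n) * c ^ n)"
    by (metis fps_mult_left_const_nth)
  thus "fps_deriv (EE c) $ n = (EE c * (fps_const c * EE c)) $ n"
    by (simp add: EE_def)
qed

lemma lin_deriv: "fps_deriv (1 - fps_const c * fps_X) = (1 - fps_const c * fps_X) * (fps_const (- c) * EE c)"
proof -
  have "(1 - fps_const c * fps_X) * (fps_const (- c) * EE c) = fps_const (-c) * (EE c * (1 - fps_const c * fps_X))"
    by (simp add: algebra_simps)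
  also have "\<dots> = - fps_const c" by (simp add: EE_inv)
  finally show ?thesis by simp
qed

lemma deriv_prod:
  fixes f g :: "'i \<Rightarrow> real fps"
  assumes "finite S" "\<And>i. i \<in> S \<Longrightarrow> fps_deriv (f i) = f i * g i"
  shows "fps_deriv (\<Prod>i\<in>S. f i) = (\<Prod>i\<in>S. f i) * (\<Sum>i\<in>S. g i)"
  using assms by (induction S rule: finite_induct) (auto simp: algebra_simps)

lemma prod_nth0: "finite S \<Longrightarrow> (\<Prod>i\<in>S. f i) $ 0 = (\<Prod>i\<in>S. (f i :: real fps) $ 0)"
  by (induction S rule: finite_induct) auto


definition FF :: "nat \<Rightarrow> (nat \<Rightarrow> real) \<Rightarrow> (nat \<Rightarrow> real) \<Rightarrow> real fps" where
  "FF m a b = (\<Prod>j=1..m. 1 - fps_const (b j) * fps_X) * (\<Prod>i=0..m. EE (a i))"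

definition QQ :: "nat \<Rightarrow> (nat \<Rightarrow> real) \<Rightarrow> (nat \<Rightarrow> real) \<Rightarrow> real fps" where
  "QQ m a b = (\<Sum>j=1..m. fps_const (- b j) * EE (b j)) + (\<Sum>i=0..m. fps_const (a i) * EE (a i))"

lemma FF_deriv: "fps_deriv (FF m a b) = FF m a b * QQ m a b"
proof -
  have 1: "fps_deriv (\<Prod>j=1..m. 1 - fps_const (b j) * fps_X) =
     (\<Prod>j=1..m. 1 - fps_const (b j) * fps_X) * (\<Sum>j=1..m. fps_const (- b j) * EE (b j))"
    by (rule deriv_prod) (simp_all only: lin_deriv finite_atLeastAtMost)
  have 2: "fps_deriv (\<Prod>i=0..m. EE (a i)) = (\<Prod>i=0..m. EE (a i)) * (\<Sum>i=0..m. fps_const (a i) * EE (a i))"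
    by (rule deriv_prod) (simp_all only: EE_deriv finite_atLeastAtMost)
  show ?thesis unfolding FF_def QQ_def fps_deriv_mult 1 2 by (simp add: algebra_simps)
qed

lemma QQ_nth: "QQ m a b $ n = q m (Suc n) a b"
  by (simp add: QQ_def q_def fps_sum_nth EE_def sum_negf)

lemma FF_0: "FF m a b $ 0 = 1"
  by (simp add: FF_def prod_nth0 EE_def)

lemma FF_rec: "FF m a b $ Suc k = (1 / real (Suc k)) * (\<Sum>i=0..k. q m (Suc (k - i)) a b * FF m a b $ i)"
proof -
  have "real (Suc k) * FF m a b $ Suc k = (FF m a b * QQ m a b) $ k"
    using FF_deriv[of m a b] by (metis fps_deriv_nth Suc_eq_plus1)
  also have "\<dots> = (\<Sum>i=0..k. q m (Suc (k - i)) a b * FF m a b $ i)"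
    by (simp add: fps_mult_nth QQ_nth mult.commute)
  finally show ?thesis by (simp add: field_simps)
qed


definition rr :: "nat \<Rightarrow> (nat \<Rightarrow> real) \<Rightarrow> (nat \<Rightarrow> real) \<Rightarrow> nat \<Rightarrow> real" where
  "rr m a b i = (\<Prod>j=1..m. a i - b j) / (\<Prod>j\<in>{0..m} - {i}. a i - a j)"

lemma lagrange:
  fixes a b :: "nat \<Rightarrow> real"
  assumes inj: "inj_on a {0..m}"
  shows "(\<Prod>j=1..m. z - b j) = (\<Sum>i=0..m. rr m a b i * (\<Prod>j\<in>{0..m}-{i}. z - a j))"
proof -
  define p where "p = (\<Prod>j=1..m. [:- b j, 1:])"
  define p2 where "p2 = (\<Sum>i=0..m. smult (rr m a b i) (\<Prod>j\<in>{0..m}-{i}. [:- a j, 1:]))"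
  have "p = p2"
  proof (rule poly_eqI_degree[where A = "a ` {0..m}"])
    fix x assume "x \<in> a ` {0..m}"
    then obtain l where l: "l \<in> {0..m}" and x: "x = a l" by auto
    have "poly p2 x = (\<Sum>i=0..m. rr m a b i * (\<Prod>j\<in>{0..m}-{i}. a l - a j))"
      by (simp add: p2_def poly_sum poly_prod x)
    also have "\<dots> = rr m a b l * (\<Prod>j\<in>{0..m}-{l}. a l - a j)"
    proof -
      have "(\<Sum>i\<in>{0..m}-{l}. rr m a b i * (\<Prod>j\<in>{0..m}-{i}. a l - a j)) = 0"
      proof (rule sum.neutral, intro ballI)
        fix i assume "i \<in> {0..m} - {l}"
        hence "l \<in> {0..m} - {i}" using l by auto
        hence "(\<Prod>j\<in>{0..m}-{i}. a l - a j) = 0" by (intro prod_zero) auto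
        thus "rr m a b i * (\<Prod>j\<in>{0..m}-{i}. a l - a j) = 0" by simp
      qed
      thus ?thesis using sum.remove[OF _ l, of "\<lambda>i. rr m a b i * (\<Prod>j\<in>{0..m}-{i}. a l - a j)"] by simp
    qed
    also have "\<dots> = (\<Prod>j=1..m. a l - b j)"
    proof -
      have "(\<Prod>j\<in>{0..m}-{l}. a l - a j) \<noteq> 0"
        using inj l by (auto simp: inj_on_def)
      thus ?thesis by (simp add: rr_def)
    qed
    also have "\<dots> = poly p x" by (simp add: p_def poly_prod x)
    finally show "poly p x = poly p2 x" by simp
  next
    have "card (a ` {0..m}) = Suc m" using inj by (simp add: card_image)
    moreover have "degree p \<le> m"
    proof -
      have "degree p \<le> sum (degree \<circ> (\<lambda>j. [:- b j, 1:])) {1..m}"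
        unfolding p_def by (rule degree_prod_sum_le) simp
      thus ?thesis by simp
    qed
    ultimately show "degree p < card (a ` {0..m})" by simp
  next
    have "card (a ` {0..m}) = Suc m" using inj by (simp add: card_image)
    moreover have "degree p2 \<le> m"
      unfolding p2_def
    proof (rule degree_sum_le)
      fix i assume i: "i \<in> {0..m}"
      have "degree (\<Prod>j\<in>{0..m}-{i}. [:- a j, 1:]) \<le> sum (degree \<circ> (\<lambda>j. [:- a j, 1:])) ({0..m}-{i})"
        by (rule degree_prod_sum_le) simp
      also have "\<dots> = m" using i by simp
      finally show "degree (smult (rr m a b i) (\<Prod>j\<in>{0..m}-{i}. [:- a j, 1:])) \<le> m"
        using degree_smult_le order_trans by blast
    qed simp
    ultimately show "degree p2 < card (a ` {0..m})" by simp
  qed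
  hence "poly p z = poly p2 z" by simp
  moreover have pl: "poly [:- c, 1:] w = w - c" for c w :: real by simp
  ultimately show ?thesis unfolding p_def p2_def poly_sum poly_prod poly_smult pl by (simp only:)
qed

lemma fps_lin: "fps_of_poly [:1, - c:] = 1 - fps_const (c::real) * fps_X"
  by (simp add: fps_of_poly_pCons fps_of_poly_const)

lemma scale_prod:
  fixes x :: real
  assumes "x \<noteq> 0" "finite S"
  shows "(\<Prod>j\<in>S. 1 - c j * x) = x ^ card S * (\<Prod>j\<in>S. inverse x - c j)"
proof -
  have "(\<Prod>j\<in>S. 1 - c j * x) = (\<Prod>j\<in>S. x * (inverse x - c j))"
  proof (rule prod.cong[OF refl])
    fix j
    have "x * inverse x = 1" using assms(1) by simp
    thus "1 - c j * x = x * (inverse x - c j)" by (simp add: right_diff_distrib mult.commute)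
  qed
  thus ?thesis by (simp add: prod.distrib)
qed

lemma fps_ident:
  fixes a b :: "nat \<Rightarrow> real"
  assumes inj: "inj_on a {0..m}"
  shows "(\<Sum>i=0..m. fps_const (rr m a b i) * (\<Prod>j\<in>{0..m}-{i}. 1 - fps_const (a j) * fps_X))
       = (\<Prod>j=1..m. 1 - fps_const (b j) * fps_X)"
proof -
  define P1 where "P1 = (\<Sum>i=0..m. smult (rr m a b i) (\<Prod>j\<in>{0..m}-{i}. [:1, - a j:]))"
  define P2 where "P2 = (\<Prod>j=1..m. [:1, - b j:])"
  have ev: "poly P1 x = poly P2 x" if x: "x \<noteq> 0" for x
  proof -
    have "poly P2 x = (\<Prod>j=1..m. 1 - b j * x)" by (simp add: P2_def poly_prod mult.commute)
    also have "\<dots> = x ^ m * (\<Prod>j=1..m. inverse x - b j)" using scale_prod[OF x, of "{1..m}" b] by simp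
    also have "\<dots> = x ^ m * (\<Sum>i=0..m. rr m a b i * (\<Prod>j\<in>{0..m}-{i}. inverse x - a j))"
      using lagrange[OF inj, where z="inverse x" and b=b] by simp
    also have "\<dots> = (\<Sum>i=0..m. rr m a b i * (\<Prod>j\<in>{0..m}-{i}. 1 - a j * x))"
      unfolding sum_distrib_left
    proof (rule sum.cong[OF refl])
      fix i assume i: "i \<in> {0..m}"
      have "(\<Prod>j\<in>{0..m}-{i}. 1 - a j * x) = x ^ m * (\<Prod>j\<in>{0..m}-{i}. inverse x - a j)"
        using scale_prod[OF x, of "{0..m}-{i}" a] i by simp
      thus "x ^ m * (rr m a b i * (\<Prod>j\<in>{0..m}-{i}. inverse x - a j)) = rr m a b i * (\<Prod>j\<in>{0..m}-{i}. 1 - a j * x)"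
        by simp
    qed
    also have "\<dots> = poly P1 x" by (simp add: P1_def poly_sum poly_prod mult.commute)
    finally show ?thesis by simp
  qed
  have "P1 = P2"
  proof (rule ccontr)
    assume "P1 \<noteq> P2"
    hence "P1 - P2 \<noteq> 0" by simp
    hence fin: "finite {x. poly (P1 - P2) x = 0}" by (rule poly_roots_finite)
    have "UNIV \<subseteq> insert 0 {x. poly (P1 - P2) x = 0}" using ev by auto
    hence "finite (UNIV :: real set)" using fin finite_subset by blast
    thus False using infinite_UNIV_char_0 by blast
  qed
  hence "fps_of_poly P1 = fps_of_poly P2" by simp
  thus ?thesis by (simp only: P1_def P2_def fps_of_poly_sum fps_of_poly_prod fps_of_poly_smult fps_lin)
qed

lemma FF_eq:
  assumes inj: "inj_on a {0..m}"
  shows "FF m a b $ k = (\<Sum>i=0..m. rr m a b i * a i ^ k)"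
proof -
  define l where "l j = 1 - fps_const (a j) * fps_X" for j
  define G where "G = (\<Sum>i=0..m. fps_const (rr m a b i) * EE (a i))"
  define A where "A = (\<Prod>i=0..m. l i)"
  define P where "P = (\<Prod>i=0..m. EE (a i))"
  have EE_inv': "(1 - fps_const c * fps_X) * EE c = 1" for c by (metis EE_inv mult.commute)
  have "A * P = (\<Prod>i=0..m. l i * EE (a i))" by (simp only: A_def P_def prod.distrib)
  also have "\<dots> = 1" by (simp only: l_def EE_inv' prod.neutral_const)
  finally have AP: "A * P = 1" .
  have "G * A = (\<Sum>i=0..m. fps_const (rr m a b i) * (EE (a i) * A))"
    by (simp add: G_def sum_distrib_right mult.assoc)
  also have "\<dots> = (\<Sum>i=0..m. fps_const (rr m a b i) * (\<Prod>j\<in>{0..m}-{i}. l j))"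
  proof (rule sum.cong[OF refl])
    fix i assume i: "i \<in> {0..m}"
    have "EE (a i) * A = (EE (a i) * l i) * (\<Prod>j\<in>{0..m}-{i}. l j)"
      unfolding A_def using prod.remove[of "{0..m}" i l] i by (simp add: mult.assoc)
    thus "fps_const (rr m a b i) * (EE (a i) * A) = fps_const (rr m a b i) * (\<Prod>j\<in>{0..m}-{i}. l j)"
      by (simp add: l_def EE_inv)
  qed
  also have "\<dots> = (\<Prod>j=1..m. 1 - fps_const (b j) * fps_X)"
    unfolding l_def by (rule fps_ident[OF inj])
  finally have GA: "G * A = (\<Prod>j=1..m. 1 - fps_const (b j) * fps_X)" .
  have "FF m a b = G * A * P" unfolding FF_def GA P_def ..
  also have "\<dots> = G" by (simp add: mult.assoc AP)
  finally show ?thesis by (simp add: G_def fps_sum_nth EE_def)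
qed


lemma expr_cf: "expr k (\<lambda>m a b. FF m a b $ k)"
proof (induction k rule: less_induct)
  case (less k)
  show ?case
  proof (cases k)
    case 0 then show ?thesis by (simp add: FF_0 expr_one)
  next
    case (Suc k')
    have eq: "(\<lambda>m a b. FF m a b $ k) = (\<lambda>m a b. of_rat (1 / of_nat (Suc k')) *
        (\<Sum>i\<in>{0..k'}. q m (Suc (k' - i)) a b * FF m a b $ i))"
      by (simp add: Suc FF_rec of_rat_divide del: of_nat_Suc)
    show ?thesis unfolding eq
    proof (rule expr_scale, rule expr_sum)
      fix i assume i: "i \<in> {0..k'}"
      have "expr (i + Suc (k' - i)) (\<lambda>m a b. q m (Suc (k' - i)) a b * FF m a b $ i)"
        using expr_mult_q[of "Suc (k'-i)" i "\<lambda>m a b. FF m a b $ i"] less[of i] Suc i by simp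
      thus "expr k (\<lambda>m a b. q m (Suc (k' - i)) a b * FF m a b $ i)" using i Suc by simp
    qed simp
  qed
qed

lemma ordered_inj:
  assumes "\<forall>i<m. (a::nat \<Rightarrow> real) i < a (Suc i)"
  shows "inj_on a {0..m}"
proof -
  have lt: "a i < a j" if "i < j" "j \<le> m" for i j
    using that
  proof (induction j)
    case 0 then show ?case by simp
  next
    case (Suc j)
    show ?case
    proof (cases "i = j")
      case True then show ?thesis using assms Suc by simp
    next
      case False
      hence "a i < a j" using Suc by simp
      also have "a j < a (Suc j)" using assms Suc by simp
      finally show ?thesis .
    qed
  qed
  show ?thesis
  proof (rule inj_onI)
    fix x y assume "x \<in> {0..m}" "y \<in> {0..m}" "a x = a y"
    thus "x = y" using lt[of x y] lt[of y x] by (cases x y rule: linorder_cases) auto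
  qed
qed

theorem theorem3p2:
  fixes k :: nat
  shows "\<exists>\<xi> :: nat list \<Rightarrow> rat. \<forall>(m::nat) (a::nat \<Rightarrow> real) (b::nat \<Rightarrow> real).
    (\<forall>i<m. a i < a (Suc i)) \<and> (\<forall>j. 1 \<le> j \<and> j < m \<longrightarrow> b j < b (Suc j)) \<longrightarrow>
    (\<Sum>i=0..m. (\<Prod>j=1..m. a i - b j) / (\<Prod>j\<in>{0..m} - {i}. a i - a j) * a i ^ k)
      = (\<Sum>\<nu>\<in>{\<nu>. is_partition \<nu> \<and> sum_list \<nu> \<le> k}. of_rat (\<xi> \<nu>) * q_part m \<nu> a b)"
proof -
  obtain \<xi> where \<xi>: "\<forall>m a b. FF m a b $ k =
     (\<Sum>\<nu>\<in>{\<nu>. is_partition \<nu> \<and> sum_list \<nu> \<le> k}. of_rat (\<xi> \<nu>) * q_part m \<nu> a b)"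
    using expr_final[OF expr_cf[of k]] by blast
  show ?thesis
  proof (rule exI[of _ \<xi>], intro allI impI)
    fix m a b assume h: "(\<forall>i<m. (a::nat\<Rightarrow>real) i < a (Suc i)) \<and> (\<forall>j. 1 \<le> j \<and> j < m \<longrightarrow> (b::nat\<Rightarrow>real) j < b (Suc j))"
    have "(\<Sum>i=0..m. (\<Prod>j=1..m. a i - b j) / (\<Prod>j\<in>{0..m} - {i}. a i - a j) * a i ^ k)
        = FF m a b $ k"
      using FF_eq[OF ordered_inj[of m a], of b k] h by (simp add: rr_def)
    thus "(\<Sum>i=0..m. (\<Prod>j=1..m. a i - b j) / (\<Prod>j\<in>{0..m} - {i}. a i - a j) * a i ^ k)
      = (\<Sum>\<nu>\<in>{\<nu>. is_partition \<nu> \<and> sum_list \<nu> \<le> k}. of_rat (\<xi> \<nu>) * q_part m \<nu> a b)"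
      using \<xi> by simp
  qed
qed

end
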